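(* Let $A_0,A_1,A_2\in\mathbb{R}[x]$ with $A_2\not\equiv0$, let $I$ be an open interval on which $A_2$ has no zeros, and let $g_0,g_1\in\mathbb{R}[x,y]$ with $g_1\not\equiv0$ and $\partial_y(g_0/g_1)\not\equiv0$. Let $\mathcal{X}=P\partial_x+Q\partial_y$ with $$P=A_2\left(g_0\,\partial_y g_1-g_1\,\partial_y g_0\right),\qquad Q=A_0g_1^2+A_1g_1g_0+A_2g_0^2+A_2\left(g_1\,\partial_x g_0-g_0\,\partial_x g_1\right).$$ Let $\{w_1,w_2\}$ be a fundamental system of solutions on $I$ of $A_2w''+A_1w'+A_0w=0$ and define $f_i(x,y)=g_1(x,y)w_i'(x)-g_0(x,y)w_i(x)$, $i=1,2$. Then on the open set $U=\{(x,y)\in I\times\mathbb{R}: f_2(x,y)\neq0\}$ the function $$H=\frac{f_1}{f_2}=\frac{g_1 w_1'-g_0w_1}{g_1w_2'-g_0w_2}$$ is a first integral of $\mathcal{X}$.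
   Context: A first integral of $\mathcal{X}=P\partial_x+Q\partial_y$ on an open set $U$ is a $C^1$ function $H:U\to\mathbb{R}$ with $P\,\partial_xH+Q\,\partial_yH=0$ on $U$ which is not constant on any nonempty open subset of $U$. *)

theory Defs
  imports "HOL-Analysis.Analysis" "HOL-Computational_Algebra.Polynomial"
begin

text \<open>Bivariate real polynomials R[x,y] are represented as R[x][y], i.e. the type
  real poly poly: a polynomial in y whose coefficients are polynomials in x.\<close>

definition eval2 :: "real poly poly \<Rightarrow> real \<Rightarrow> real \<Rightarrow> real" where
  "eval2 g x y = poly (map_poly (\<lambda>c. poly c x) g) y"

definition dx2 :: "real poly poly \<Rightarrow> real poly poly" where
  "dx2 g = map_poly pderiv g"

definition dy2 :: "real poly poly \<Rightarrow> real poly poly" where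
  "dy2 g = pderiv g"

definition cx :: "real poly \<Rightarrow> real poly poly" where
  "cx a = [:a:]"

definition ode_solution :: "real poly \<Rightarrow> real poly \<Rightarrow> real poly \<Rightarrow> real set \<Rightarrow> (real \<Rightarrow> real) \<Rightarrow> bool" where
  "ode_solution A0 A1 A2 I w \<longleftrightarrow>
     (\<forall>x\<in>I. w differentiable (at x) \<and> deriv w differentiable (at x) \<and>
        poly A2 x * deriv (deriv w) x + poly A1 x * deriv w x + poly A0 x * w x = 0)"

definition fundamental_system :: "real poly \<Rightarrow> real poly \<Rightarrow> real poly \<Rightarrow> real set \<Rightarrow> (real \<Rightarrow> real) \<Rightarrow> (real \<Rightarrow> real) \<Rightarrow> bool" where
  "fundamental_system A0 A1 A2 I w1 w2 \<longleftrightarrow>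
     ode_solution A0 A1 A2 I w1 \<and> ode_solution A0 A1 A2 I w2 \<and>
     (\<forall>c1 c2::real. (\<forall>x\<in>I. c1 * w1 x + c2 * w2 x = 0) \<longrightarrow> c1 = 0 \<and> c2 = 0)"

definition first_integral :: "(real \<times> real \<Rightarrow> real) \<Rightarrow> (real \<times> real \<Rightarrow> real) \<Rightarrow> (real \<times> real) set \<Rightarrow> (real \<times> real \<Rightarrow> real) \<Rightarrow> bool" where
  "first_integral P Q U H \<longleftrightarrow>
     (\<exists>Hx Hy. (\<forall>p\<in>U. (H has_derivative (\<lambda>(u, v). Hx p * u + Hy p * v)) (at p)) \<and>
        continuous_on U Hx \<and> continuous_on U Hy \<and>
        (\<forall>p\<in>U. P p * Hx p + Q p * Hy p = 0)) \<and>
     (\<forall>V. open V \<and> V \<noteq> {} \<and> V \<subseteq> U \<longrightarrow> \<not> (\<exists>c. \<forall>p\<in>V. H p = c))"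

end

theory Submission
  imports Defs
begin

lemma eval2_0[simp]: "eval2 0 x y = 0"
  by (simp add: eval2_def)

lemma eval2_pCons[simp]: "eval2 (pCons a g) x y = poly a x + y * eval2 g x y"
  by (simp add: eval2_def map_poly_pCons)

lemma eval2_alt: "eval2 g x y = poly (poly g [:y:]) x"
  by (induction g) auto

lemma eval2_add[simp]: "eval2 (p + q) x y = eval2 p x y + eval2 q x y"
  by (simp add: eval2_alt)
lemma eval2_diff[simp]: "eval2 (p - q) x y = eval2 p x y - eval2 q x y"
  by (simp add: eval2_alt)
lemma eval2_mult[simp]: "eval2 (p * q) x y = eval2 p x y * eval2 q x y"
  by (simp add: eval2_alt)
lemma eval2_pow[simp]: "eval2 (p ^ n) x y = eval2 p x y ^ n"
  by (simp add: eval2_alt poly_power)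
lemma eval2_cx[simp]: "eval2 (cx a) x y = poly a x"
  by (simp add: eval2_alt cx_def)

lemma dx2_pCons[simp]: "dx2 (pCons a g) = pCons (pderiv a) (dx2 g)"
  by (simp add: dx2_def map_poly_pCons)

lemma eval2_dy2_pCons[simp]: "eval2 (dy2 (pCons a g)) x y = eval2 g x y + y * eval2 (dy2 g) x y"
  by (simp add: dy2_def pderiv_pCons)

lemma eval2_dy2_0[simp]: "eval2 (dy2 0) x y = 0" by (simp add: dy2_def)
lemma dx2_0[simp]: "dx2 0 = 0" by (simp add: dx2_def)

lemma eval2_map: "eval2 g x y = poly (map_poly (\<lambda>c. poly c x) g) y"
  by (simp add: eval2_def)

lemma eval2_dy2_map: "eval2 (dy2 g) x y = poly (pderiv (map_poly (\<lambda>c. poly c x) g)) y"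
  by (induction g) (simp_all add: map_poly_pCons pderiv_pCons eval2_map[symmetric])


lemma eval2_has_derivative:
  "((\<lambda>p. eval2 g (fst p) (snd p)) has_derivative
     (\<lambda>h. eval2 (dx2 g) x y * fst h + eval2 (dy2 g) x y * snd h)) (at (x, y))"
proof (induction g)
  case 0
  then show ?case by simp
next
  case (pCons a g)
  have ha: "((\<lambda>p. poly a (fst p)) has_derivative (\<lambda>h. poly (pderiv a) x * fst h)) (at (x, y))"
  proof -
    have d: "(poly a has_derivative (*) (poly (pderiv a) x)) (at (fst (x,y)))"
      using has_field_derivative_imp_has_derivative[OF poly_DERIV[of a x]] by simp
    have f: "(fst has_derivative fst) (at (x,y))" by (rule bounded_linear_imp_has_derivative[OF bounded_linear_fst])
    show ?thesis using has_derivative_compose[OF f d] by simp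
  qed
  have hs: "((\<lambda>p. snd p) has_derivative (\<lambda>h. snd h)) (at (x, y))"
    by (rule has_derivative_snd[OF has_derivative_ident])
  have D: "((\<lambda>p. poly a (fst p) + snd p * eval2 g (fst p) (snd p)) has_derivative
     (\<lambda>h. poly (pderiv a) x * fst h + (snd (x,y) * (eval2 (dx2 g) x y * fst h + eval2 (dy2 g) x y * snd h)
        + snd h * eval2 g (fst (x,y)) (snd (x,y))))) (at (x, y))"
    by (intro has_derivative_add ha has_derivative_mult hs pCons.IH)
  have eq: "(\<lambda>p. eval2 (pCons a g) (fst p) (snd p)) = (\<lambda>p. poly a (fst p) + snd p * eval2 g (fst p) (snd p))"
    by simp
  show ?case unfolding eq
    by (rule has_derivative_eq_rhs[OF D]) (auto simp: fun_eq_iff algebra_simps)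
qed

lemma eval2_DERIV_y: "((\<lambda>t. eval2 g x t) has_real_derivative eval2 (dy2 g) x y) (at y)"
  unfolding eval2_dy2_map unfolding eval2_map by (rule poly_DERIV)

lemma eval2_continuous: "continuous_on S (\<lambda>p. eval2 g (fst p) (snd p))"
proof -
  have "isCont (\<lambda>p. eval2 g (fst p) (snd p)) p" for p
    using eval2_has_derivative[of g "fst p" "snd p"] has_derivative_continuous by fastforce
  then show ?thesis by (simp add: continuous_at_imp_continuous_on)
qed

lemma energy_bound:
  fixes u v w b0 b1 M :: real
  assumes "w = - (b1 * v + b0 * u)" "\<bar>b1\<bar> + \<bar>b0\<bar> \<le> M"
  shows "\<bar>2 * u * v + 2 * v * w\<bar> \<le> (1 + 3 * M) * (u\<^sup>2 + v\<^sup>2)"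
proof -
  have e1: "\<bar>2 * u * v\<bar> \<le> u\<^sup>2 + v\<^sup>2"
  proof -
    have "0 \<le> (\<bar>u\<bar> - \<bar>v\<bar>)\<^sup>2" by simp
    then show ?thesis by (simp add: power2_eq_square abs_mult algebra_simps)
  qed
  have e2: "\<bar>2 * v * w\<bar> \<le> 2 * \<bar>b1\<bar> * v\<^sup>2 + \<bar>b0\<bar> * \<bar>2 * u * v\<bar>"
  proof -
    have "2 * v * w = - (2 * b1 * v\<^sup>2) - b0 * (2 * u * v)" unfolding assms(1) by (simp add: algebra_simps power2_eq_square)
    then have "\<bar>2 * v * w\<bar> \<le> \<bar>2 * b1 * v\<^sup>2\<bar> + \<bar>b0 * (2 * u * v)\<bar>" by linarith
    then show ?thesis by (simp add: abs_mult)
  qed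
  define Z where "Z = u\<^sup>2 + v\<^sup>2"
  have Z0: "0 \<le> Z" by (simp add: Z_def)
  have m1: "\<bar>b1\<bar> * v\<^sup>2 \<le> \<bar>b1\<bar> * Z" unfolding Z_def by (rule mult_left_mono) auto
  have m2: "\<bar>b0\<bar> * \<bar>2 * u * v\<bar> \<le> \<bar>b0\<bar> * Z" unfolding Z_def using e1 by (rule mult_left_mono) auto
  have m3: "(\<bar>b1\<bar> + \<bar>b0\<bar>) * Z \<le> M * Z" using assms(2) Z0 by (rule mult_right_mono)
  have m4: "0 \<le> \<bar>b1\<bar> * Z" "0 \<le> \<bar>b0\<bar> * Z" using Z0 by auto
  have "\<bar>2 * u * v + 2 * v * w\<bar> \<le> \<bar>2 * u * v\<bar> + \<bar>2 * v * w\<bar>" by (rule abs_triangle_ineq)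
  also have "\<dots> \<le> Z + 2 * (\<bar>b1\<bar> * Z) + \<bar>b0\<bar> * Z" using e1 e2 m1 m2 unfolding Z_def by linarith
  also have "\<dots> \<le> Z + 3 * (M * Z)" using m3 m4 by (simp add: algebra_simps)
  finally show ?thesis unfolding Z_def by (simp add: algebra_simps)
qed

lemma ode_unique:
  fixes u u' u'' :: "real \<Rightarrow> real"
  assumes I: "is_interval I" and A2: "\<forall>x\<in>I. poly A2 x \<noteq> 0"
    and du: "\<forall>x\<in>I. (u has_real_derivative u' x) (at x)"
    and du': "\<forall>x\<in>I. (u' has_real_derivative u'' x) (at x)"
    and eq: "\<forall>x\<in>I. poly A2 x * u'' x + poly A1 x * u' x + poly A0 x * u x = 0"
    and t0: "t0 \<in> I" "u t0 = 0" "u' t0 = 0" and t: "t \<in> I"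
  shows "u t = 0"
proof -
  define lo where "lo = min t t0"
  define hi where "hi = max t t0"
  have lohi: "lo \<le> hi" unfolding lo_def hi_def by simp
  have sub: "{lo..hi} \<subseteq> I"
  proof
    fix s assume s: "s \<in> {lo..hi}"
    have "lo \<in> I" "hi \<in> I" using t t0 by (auto simp: lo_def hi_def min_def max_def)
    then show "s \<in> I" using I s unfolding is_interval_1 atLeastAtMost_iff by blast
  qed
  define a where "a s = \<bar>poly A1 s / poly A2 s\<bar> + \<bar>poly A0 s / poly A2 s\<bar>" for s
  have ca: "continuous_on {lo..hi} a"
    unfolding a_def using sub A2 by (intro continuous_intros) auto
  then have "bounded (a ` {lo..hi})"
    by (intro compact_imp_bounded compact_continuous_image) auto
  then obtain M where M0: "\<forall>x\<in>a ` {lo..hi}. \<bar>x\<bar> \<le> M"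
    unfolding bounded_real by blast
  have M: "\<bar>a s\<bar> \<le> M" if "s \<in> {lo..hi}" for s using M0 that by blast
  have M0': "0 \<le> M" using M[of lo] lohi by (meson abs_ge_zero atLeastAtMost_iff order_refl order_trans)
  define K where "K = 1 + 3 * M"
  define E where "E s = (u s)\<^sup>2 + (u' s)\<^sup>2" for s
  define E' where "E' s = 2 * u s * u' s + 2 * u' s * u'' s" for s
  have dE: "(E has_real_derivative E' s) (at s)" if "s \<in> I" for s
    unfolding E_def E'_def using du du' that
    by (auto intro!: derivative_eq_intros simp: power2_eq_square algebra_simps)
  have bE: "\<bar>E' s\<bar> \<le> K * E s" if "s \<in> {lo..hi}" for s
  proof -
    have sI: "s \<in> I" using that sub by auto
    have "u'' s = - (poly A1 s / poly A2 s * u' s + poly A0 s / poly A2 s * u s)"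
    proof -
      have h: "poly A2 s * u'' s = - (poly A1 s * u' s + poly A0 s * u s)" using eq sI by fastforce
      have "poly A2 s \<noteq> 0" using A2 sI by auto
      then show ?thesis using h by (simp add: field_simps)
    qed
    moreover have "\<bar>poly A1 s / poly A2 s\<bar> + \<bar>poly A0 s / poly A2 s\<bar> \<le> M"
      using M[OF that] unfolding a_def by simp
    ultimately show ?thesis unfolding E'_def E_def K_def by (rule energy_bound)
  qed
  have E0: "E t0 = 0" using t0 by (simp add: E_def)
  have Enn: "0 \<le> E s" for s by (simp add: E_def)
  have "E t = 0"
  proof (cases "t0 \<le> t")
    case True
    then have lh: "lo = t0" "hi = t" by (auto simp: lo_def hi_def)
    define F where "F s = E s * exp (- K * s)" for s
    have "F t \<le> F t0"
    proof (rule DERIV_nonpos_imp_nonincreasing[OF True])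
      fix s assume s: "t0 \<le> s" "s \<le> t"
      then have sI: "s \<in> I" and sl: "s \<in> {lo..hi}" using sub lh by auto
      have ex: "((\<lambda>s. exp (- K * s)) has_real_derivative exp (- K * s) * (- K)) (at s)"
        by (auto intro!: derivative_eq_intros)
      have "(F has_real_derivative (E' s * exp (- K * s) + exp (- K * s) * (- K) * E s)) (at s)"
        unfolding F_def by (rule DERIV_mult[OF dE[OF sI] ex])
      moreover have "E' s * exp (- K * s) + exp (- K * s) * (- K) * E s = (E' s - K * E s) * exp (- K * s)"
        by (simp add: algebra_simps)
      moreover have "E' s - K * E s \<le> 0" using bE[OF sl] by linarith
      ultimately show "\<exists>y. (F has_real_derivative y) (at s) \<and> y \<le> 0"
        by (metis exp_gt_zero less_eq_real_def mult_nonpos_nonneg)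
    qed
    then have "E t * exp (- K * t) \<le> 0" using E0 by (simp add: F_def)
    then show ?thesis using Enn[of t] by (simp add: mult_le_0_iff)
  next
    case False
    then have le: "t \<le> t0" by simp
    then have lh: "lo = t" "hi = t0" by (auto simp: lo_def hi_def)
    define G where "G s = E s * exp (K * s)" for s
    have "G t \<le> G t0"
    proof (rule DERIV_nonneg_imp_nondecreasing[OF le])
      fix s assume s: "t \<le> s" "s \<le> t0"
      then have sI: "s \<in> I" and sl: "s \<in> {lo..hi}" using sub lh by auto
      have ex: "((\<lambda>s. exp (K * s)) has_real_derivative exp (K * s) * K) (at s)"
        by (auto intro!: derivative_eq_intros)
      have "(G has_real_derivative (E' s * exp (K * s) + exp (K * s) * K * E s)) (at s)"
        unfolding G_def by (rule DERIV_mult[OF dE[OF sI] ex])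
      moreover have "E' s * exp (K * s) + exp (K * s) * K * E s = (E' s + K * E s) * exp (K * s)"
        by (simp add: algebra_simps)
      moreover have "0 \<le> E' s + K * E s" using bE[OF sl] by linarith
      ultimately show "\<exists>y. (G has_real_derivative y) (at s) \<and> 0 \<le> y"
        by (metis exp_gt_zero less_eq_real_def zero_le_mult_iff)
    qed
    then have "E t * exp (K * t) \<le> 0" using E0 by (simp add: G_def)
    then show ?thesis using Enn[of t] by (simp add: mult_le_0_iff)
  qed
  then show ?thesis unfolding E_def
    by (metis add_nonneg_eq_0_iff zero_le_power2 power_eq_0_iff zero_neq_numeral)
qed

lemma key_identity:
  fixes A0 A1 A2 G0 G1 G0x G1x G0y G1y v1 d1 e1 v2 d2 e2 :: real
  assumes h1: "A2 * e1 + A1 * d1 + A0 * v1 = 0" and h2: "A2 * e2 + A1 * d2 + A0 * v2 = 0"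
  shows "A2 * (G0 * G1y - G1 * G0y) *
     ((G1x * d1 + G1 * e1 - G0x * v1 - G0 * d1) * (G1 * d2 - G0 * v2)
       - (G1 * d1 - G0 * v1) * (G1x * d2 + G1 * e2 - G0x * v2 - G0 * d2))
   + (A0 * G1\<^sup>2 + A1 * G1 * G0 + A2 * G0\<^sup>2 + A2 * (G1 * G0x - G0 * G1x)) *
     ((G1y * d1 - G0y * v1) * (G1 * d2 - G0 * v2) - (G1 * d1 - G0 * v1) * (G1y * d2 - G0y * v2)) = 0"
proof -
  have "A2 * (G0 * G1y - G1 * G0y) *
     ((G1x * d1 + G1 * e1 - G0x * v1 - G0 * d1) * (G1 * d2 - G0 * v2)
       - (G1 * d1 - G0 * v1) * (G1x * d2 + G1 * e2 - G0x * v2 - G0 * d2))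
   + (A0 * G1\<^sup>2 + A1 * G1 * G0 + A2 * G0\<^sup>2 + A2 * (G1 * G0x - G0 * G1x)) *
     ((G1y * d1 - G0y * v1) * (G1 * d2 - G0 * v2) - (G1 * d1 - G0 * v1) * (G1y * d2 - G0y * v2))
   = (G0 * G1y - G1 * G0y) * G1 * ((G1 * d2 - G0 * v2) * (A2 * e1 + A1 * d1 + A0 * v1)
        - (G1 * d1 - G0 * v1) * (A2 * e2 + A1 * d2 + A0 * v2))"
    by algebra
  then show ?thesis using h1 h2 by simp
qed

lemma open_infinite:
  fixes S :: "real set"
  assumes "open S" "x \<in> S"
  shows "infinite S"
proof -
  obtain e where e: "e > 0" "ball x e \<subseteq> S" using assms open_contains_ball by blast
  have "{x - e<..<x + e} \<subseteq> ball x e" by (auto simp: dist_real_def)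
  moreover have "infinite {x - e<..<x + e}" using e by simp
  ultimately show ?thesis using e infinite_super by blast
qed

lemma fst_cont:
  assumes "continuous_on I \<phi>" "fst ` U \<subseteq> I"
  shows "continuous_on U (\<lambda>p. \<phi> (fst p))"
  by (rule continuous_on_compose2[OF assms(1) continuous_on_fst[OF continuous_on_id] assms(2)])

lemma fst_deriv:
  assumes "(\<phi> has_real_derivative d) (at x)"
  shows "((\<lambda>p. \<phi> (fst p)) has_derivative (\<lambda>h. d * fst h)) (at (x, y))"
proof -
  have d: "(\<phi> has_derivative (*) d) (at (fst (x,y)))"
    using has_field_derivative_imp_has_derivative[OF assms] by simp
  have f: "(fst has_derivative fst) (at (x,y))" by (rule bounded_linear_imp_has_derivative[OF bounded_linear_fst])
  show ?thesis using has_derivative_compose[OF f d] by simp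
qed

lemma sol_facts:
  assumes sol: "ode_solution A0 A1 A2 I w" and I: "open I" and A2: "\<forall>x\<in>I. poly A2 x \<noteq> 0"
  shows "\<forall>x\<in>I. (w has_real_derivative deriv w x) (at x)"
    "\<forall>x\<in>I. (deriv w has_real_derivative deriv (deriv w) x) (at x)"
    "\<forall>x\<in>I. poly A2 x * deriv (deriv w) x + poly A1 x * deriv w x + poly A0 x * w x = 0"
    "continuous_on I w" "continuous_on I (deriv w)" "continuous_on I (deriv (deriv w))"
proof -
  show d1: "\<forall>x\<in>I. (w has_real_derivative deriv w x) (at x)"
    using sol unfolding ode_solution_def by (simp add: DERIV_deriv_iff_real_differentiable)
  show d2: "\<forall>x\<in>I. (deriv w has_real_derivative deriv (deriv w) x) (at x)"
    using sol unfolding ode_solution_def by (simp add: DERIV_deriv_iff_real_differentiable)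
  show e: "\<forall>x\<in>I. poly A2 x * deriv (deriv w) x + poly A1 x * deriv w x + poly A0 x * w x = 0"
    using sol unfolding ode_solution_def by simp
  show c1: "continuous_on I w"
    using d1 by (meson DERIV_isCont continuous_at_imp_continuous_on)
  show c2: "continuous_on I (deriv w)"
    using d2 by (meson DERIV_isCont continuous_at_imp_continuous_on)
  have "continuous_on I (\<lambda>x. - (poly A1 x * deriv w x + poly A0 x * w x) / poly A2 x)"
    using A2 c1 c2 by (intro continuous_intros) auto
  moreover have "\<forall>x\<in>I. - (poly A1 x * deriv w x + poly A0 x * w x) / poly A2 x = deriv (deriv w) x"
  proof
    fix x assume x: "x \<in> I"
    have h: "poly A2 x * deriv (deriv w) x = - (poly A1 x * deriv w x + poly A0 x * w x)"
      using e x by fastforce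
    show "- (poly A1 x * deriv w x + poly A0 x * w x) / poly A2 x = deriv (deriv w) x"
      using A2 x h by (simp add: field_simps)
  qed
  ultimately show "continuous_on I (deriv (deriv w))" by (metis (no_types, lifting) continuous_on_eq)
qed

lemma fF_deriv:
  assumes "(w has_real_derivative deriv w x) (at x)" "(deriv w has_real_derivative deriv (deriv w) x) (at x)"
  shows "((\<lambda>p. eval2 g1 (fst p) (snd p) * deriv w (fst p) - eval2 g0 (fst p) (snd p) * w (fst p)) has_derivative
     (\<lambda>h. (eval2 (dx2 g1) x y * deriv w x + eval2 g1 x y * deriv (deriv w) x - eval2 (dx2 g0) x y * w x - eval2 g0 x y * deriv w x) * fst h
        + (eval2 (dy2 g1) x y * deriv w x - eval2 (dy2 g0) x y * w x) * snd h)) (at (x, y))"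
proof -
  have D: "((\<lambda>p. eval2 g1 (fst p) (snd p) * deriv w (fst p) - eval2 g0 (fst p) (snd p) * w (fst p)) has_derivative
     (\<lambda>h. (eval2 g1 (fst (x,y)) (snd (x,y)) * (deriv (deriv w) x * fst h) + (eval2 (dx2 g1) x y * fst h + eval2 (dy2 g1) x y * snd h) * deriv w (fst (x,y)))
        - (eval2 g0 (fst (x,y)) (snd (x,y)) * (deriv w x * fst h) + (eval2 (dx2 g0) x y * fst h + eval2 (dy2 g0) x y * snd h) * w (fst (x,y))))) (at (x, y))"
    by (intro has_derivative_diff has_derivative_mult eval2_has_derivative fst_deriv assms)
  show ?thesis
    by (rule has_derivative_eq_rhs[OF D]) (auto simp: fun_eq_iff algebra_simps)
qed

lemma poly_zero_on_infinite:
  fixes p :: "'a::idom poly"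
  assumes "infinite S" "\<forall>x\<in>S. poly p x = 0"
  shows "p = 0"
proof (rule ccontr)
  assume "p \<noteq> 0"
  then have "finite {x. poly p x = 0}" by (rule poly_roots_finite)
  moreover have "S \<subseteq> {x. poly p x = 0}" using assms(2) by auto
  ultimately show False using assms(1) finite_subset by blast
qed

lemma nonconst:
  assumes I: "is_interval I" "open I" and A2: "\<forall>x\<in>I. poly A2 x \<noteq> 0"
    and dy_quot: "\<exists>x y. eval2 g1 x y \<noteq> 0 \<and> deriv (\<lambda>t. eval2 g0 x t / eval2 g1 x t) y \<noteq> 0"
    and fund: "fundamental_system A0 A1 A2 I w1 w2"
    and V: "open V" "V \<noteq> {}"
    and VU: "\<And>x y. (x, y) \<in> V \<Longrightarrow> x \<in> I \<and> eval2 g1 x y * deriv w2 x - eval2 g0 x y * w2 x \<noteq> 0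
        \<and> (eval2 g1 x y * deriv w1 x - eval2 g0 x y * w1 x) / (eval2 g1 x y * deriv w2 x - eval2 g0 x y * w2 x) = c"
  shows False
proof -
  obtain x0 y0 where p0: "(x0, y0) \<in> V" using V(2) by auto
  obtain A B where AB: "open A" "open B" "(x0, y0) \<in> A \<times> B" "A \<times> B \<subseteq> V"
    using open_prod_elim[OF V(1) p0] by blast
  have AB': "x \<in> I \<and> eval2 g1 x y * deriv w2 x - eval2 g0 x y * w2 x \<noteq> 0
        \<and> (eval2 g1 x y * deriv w1 x - eval2 g0 x y * w1 x) / (eval2 g1 x y * deriv w2 x - eval2 g0 x y * w2 x) = c"
    if "x \<in> A" "y \<in> B" for x y using VU[of x y] AB(4) that by auto
  have AI: "A \<subseteq> I" using AB' AB(3) by auto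
  have infA: "infinite A" using open_infinite[OF AB(1)] AB(3) by auto
  have infB: "infinite B" using open_infinite[OF AB(2)] AB(3) by auto
  have s1: "ode_solution A0 A1 A2 I w1" and s2: "ode_solution A0 A1 A2 I w2"
    and indep: "\<forall>c1 c2::real. (\<forall>x\<in>I. c1 * w1 x + c2 * w2 x = 0) \<longrightarrow> c1 = 0 \<and> c2 = 0"
    using fund unfolding fundamental_system_def by blast+
  note f1 = sol_facts[OF s1 I(2) A2] and f2 = sol_facts[OF s2 I(2) A2]
  define u where "u t = w1 t - c * w2 t" for t
  define u' where "u' t = deriv w1 t - c * deriv w2 t" for t
  define u'' where "u'' t = deriv (deriv w1) t - c * deriv (deriv w2) t" for t
  have du: "\<forall>x\<in>I. (u has_real_derivative u' x) (at x)"
    unfolding u_def[abs_def] u'_def using f1(1) f2(1) by (auto intro!: derivative_eq_intros)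
  have du': "\<forall>x\<in>I. (u' has_real_derivative u'' x) (at x)"
    unfolding u'_def[abs_def] u''_def using f1(2) f2(2) by (auto intro!: derivative_eq_intros)
  have ueq: "\<forall>x\<in>I. poly A2 x * u'' x + poly A1 x * u' x + poly A0 x * u x = 0"
  proof
    fix x assume x: "x \<in> I"
    have "poly A2 x * u'' x + poly A1 x * u' x + poly A0 x * u x =
      (poly A2 x * deriv (deriv w1) x + poly A1 x * deriv w1 x + poly A0 x * w1 x)
      - c * (poly A2 x * deriv (deriv w2) x + poly A1 x * deriv w2 x + poly A0 x * w2 x)"
      unfolding u_def u'_def u''_def by (simp add: algebra_simps)
    then show "poly A2 x * u'' x + poly A1 x * u' x + poly A0 x * u x = 0"
      using f1(3) f2(3) x by simp
  qed
  have nz: "u x \<noteq> 0 \<or> u' x \<noteq> 0" if x: "x \<in> A" for x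
  proof (rule ccontr)
    assume "\<not> (u x \<noteq> 0 \<or> u' x \<noteq> 0)"
    then have z: "u x = 0" "u' x = 0" by auto
    have "\<forall>t\<in>I. u t = 0"
      using ode_unique[OF I(1) A2 du du' ueq _ z] x AI by auto
    then have "\<forall>t\<in>I. 1 * w1 t + (- c) * w2 t = 0" by (simp add: u_def)
    then show False using indep[rule_format, of 1 "- c"] by simp
  qed
  have rel: "eval2 g1 x y * u' x = eval2 g0 x y * u x" if "x \<in> A" "y \<in> B" for x y
  proof -
    have h: "eval2 g1 x y * deriv w2 x - eval2 g0 x y * w2 x \<noteq> 0"
      "(eval2 g1 x y * deriv w1 x - eval2 g0 x y * w1 x) / (eval2 g1 x y * deriv w2 x - eval2 g0 x y * w2 x) = c"
      using AB'[OF that] by auto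
    then have "eval2 g1 x y * deriv w1 x - eval2 g0 x y * w1 x = c * (eval2 g1 x y * deriv w2 x - eval2 g0 x y * w2 x)"
      by (simp add: divide_eq_eq)
    then show ?thesis unfolding u_def u'_def by (simp add: algebra_simps)
  qed
  define D where "D = g0 * dy2 g1 - g1 * dy2 g0"
  have Dz: "eval2 D x y = 0" if x: "x \<in> A" for x y
  proof -
    define G0 where "G0 = map_poly (\<lambda>c. poly c x) g0"
    define G1 where "G1 = map_poly (\<lambda>c. poly c x) g1"
    define R where "R = smult (u' x) G1 - smult (u x) G0"
    have "\<forall>y\<in>B. poly R y = 0"
      using rel[OF x] unfolding R_def G0_def G1_def by (simp add: eval2_map[symmetric] algebra_simps)
    then have R0: "R = 0" by (rule poly_zero_on_infinite[OF infB])
    then have "poly R y = 0" "poly (pderiv R) y = 0" by simp_all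
    then have r1: "u' x * poly G1 y = u x * poly G0 y"
      and r2: "u' x * poly (pderiv G1) y = u x * poly (pderiv G0) y"
      unfolding R_def by (simp_all add: pderiv_diff pderiv_smult)
    have De: "eval2 D x y = poly G0 y * poly (pderiv G1) y - poly G1 y * poly (pderiv G0) y"
      unfolding D_def G0_def G1_def by (simp add: eval2_map[symmetric] eval2_dy2_map[symmetric])
    have "u' x * eval2 D x y = poly G0 y * (u' x * poly (pderiv G1) y) - (u' x * poly G1 y) * poly (pderiv G0) y"
      unfolding De by (simp add: algebra_simps)
    also have "\<dots> = poly G0 y * (u x * poly (pderiv G0) y) - (u x * poly G0 y) * poly (pderiv G0) y"
      by (simp only: r1 r2)
    also have "\<dots> = 0" by (simp add: algebra_simps)
    finally have m1: "u' x * eval2 D x y = 0" .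
    have "u x * eval2 D x y = (u x * poly G0 y) * poly (pderiv G1) y - poly G1 y * (u x * poly (pderiv G0) y)"
      unfolding De by (simp add: algebra_simps)
    also have "\<dots> = (u' x * poly G1 y) * poly (pderiv G1) y - poly G1 y * (u' x * poly (pderiv G1) y)"
      by (simp only: r1 r2)
    also have "\<dots> = 0" by (simp add: algebra_simps)
    finally have m2: "u x * eval2 D x y = 0" .
    note m1 m2
    moreover note m1 m2
    ultimately show ?thesis using nz[OF x] by auto
  qed
  have Dc: "poly D [:y:] = 0" for y
    by (rule poly_zero_on_infinite[OF infA]) (use Dz in \<open>simp add: eval2_alt\<close>)
  have D0: "D = 0"
  proof (rule poly_zero_on_infinite)
    show "infinite (range (\<lambda>y::real. [:y:]))"
    proof
      assume "finite (range (\<lambda>y::real. [:y:]))"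
      then have "finite (UNIV :: real set)" by (rule finite_imageD) (auto simp: inj_on_def)
      then show False using infinite_UNIV_char_0 by blast
    qed
    show "\<forall>x\<in>range (\<lambda>y. [:y:]). poly D x = 0" using Dc by auto
  qed
  obtain xs ys where xs: "eval2 g1 xs ys \<noteq> 0" "deriv (\<lambda>t. eval2 g0 xs t / eval2 g1 xs t) ys \<noteq> 0"
    using dy_quot by blast
  have "((\<lambda>t. eval2 g0 xs t / eval2 g1 xs t) has_real_derivative
      (eval2 (dy2 g0) xs ys * eval2 g1 xs ys - eval2 g0 xs ys * eval2 (dy2 g1) xs ys) / (eval2 g1 xs ys * eval2 g1 xs ys)) (at ys)"
    by (rule DERIV_divide[OF eval2_DERIV_y eval2_DERIV_y xs(1)])
  moreover have "eval2 (dy2 g0) xs ys * eval2 g1 xs ys - eval2 g0 xs ys * eval2 (dy2 g1) xs ys = - eval2 D xs ys"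
    unfolding D_def by (simp add: algebra_simps)
  ultimately have "deriv (\<lambda>t. eval2 g0 xs t / eval2 g1 xs t) ys = 0"
    using D0 DERIV_imp_deriv by fastforce
  then show False using xs(2) by simp
qed

theorem mainTheorem3:
  fixes A0 A1 A2 :: "real poly" and g0 g1 :: "real poly poly"
    and I :: "real set" and w1 w2 :: "real \<Rightarrow> real"
  assumes A2_nz: "A2 \<noteq> 0"
    and I_int: "is_interval I" "open I" "I \<noteq> {}"
    and A2_I: "\<forall>x\<in>I. poly A2 x \<noteq> 0"
    and g1_nz: "g1 \<noteq> 0"
    and dy_quot: "\<exists>x y. eval2 g1 x y \<noteq> 0 \<and> deriv (\<lambda>t. eval2 g0 x t / eval2 g1 x t) y \<noteq> 0"
    and fund: "fundamental_system A0 A1 A2 I w1 w2"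
  shows "let P = cx A2 * (g0 * dy2 g1 - g1 * dy2 g0);
             Q = cx A0 * g1\<^sup>2 + cx A1 * g1 * g0 + cx A2 * g0\<^sup>2 + cx A2 * (g1 * dx2 g0 - g0 * dx2 g1);
             f1 = (\<lambda>(x, y). eval2 g1 x y * deriv w1 x - eval2 g0 x y * w1 x);
             f2 = (\<lambda>(x, y). eval2 g1 x y * deriv w2 x - eval2 g0 x y * w2 x);
             U = {(x, y). x \<in> I \<and> f2 (x, y) \<noteq> 0}
         in open U \<and>
            first_integral (\<lambda>(x, y). eval2 P x y) (\<lambda>(x, y). eval2 Q x y) U (\<lambda>p. f1 p / f2 p)"
proof -
  define P where "P = cx A2 * (g0 * dy2 g1 - g1 * dy2 g0)"
  define Q where "Q = cx A0 * g1\<^sup>2 + cx A1 * g1 * g0 + cx A2 * g0\<^sup>2 + cx A2 * (g1 * dx2 g0 - g0 * dx2 g1)"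
  define f1 where "f1 = (\<lambda>(x, y). eval2 g1 x y * deriv w1 x - eval2 g0 x y * w1 x)"
  define f2 where "f2 = (\<lambda>(x, y). eval2 g1 x y * deriv w2 x - eval2 g0 x y * w2 x)"
  define U where "U = {(x, y). x \<in> I \<and> f2 (x, y) \<noteq> 0}"
  have s1: "ode_solution A0 A1 A2 I w1" and s2: "ode_solution A0 A1 A2 I w2"
    using fund unfolding fundamental_system_def by blast+
  note sf1 = sol_facts[OF s1 I_int(2) A2_I] and sf2 = sol_facts[OF s2 I_int(2) A2_I]
  define F where "F w p = eval2 g1 (fst p) (snd p) * deriv w (fst p) - eval2 g0 (fst p) (snd p) * w (fst p)"
    for w :: "real \<Rightarrow> real" and p :: "real \<times> real"
  define Fx where "Fx w p = eval2 (dx2 g1) (fst p) (snd p) * deriv w (fst p) + eval2 g1 (fst p) (snd p) * deriv (deriv w) (fst p)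
      - eval2 (dx2 g0) (fst p) (snd p) * w (fst p) - eval2 g0 (fst p) (snd p) * deriv w (fst p)"
    for w :: "real \<Rightarrow> real" and p :: "real \<times> real"
  define Fy where "Fy w p = eval2 (dy2 g1) (fst p) (snd p) * deriv w (fst p) - eval2 (dy2 g0) (fst p) (snd p) * w (fst p)"
    for w :: "real \<Rightarrow> real" and p :: "real \<times> real"
  have f1F: "f1 = F w1" and f2F: "f2 = F w2" unfolding f1_def f2_def F_def[abs_def] by (auto simp: fun_eq_iff)
  have UF: "U = (F w2 -` (- {0})) \<inter> (I \<times> UNIV)" unfolding U_def f2F by auto
  have fstU: "fst ` U \<subseteq> I" unfolding U_def by auto
  have fstI: "fst ` (I \<times> (UNIV::real set)) \<subseteq> I" by auto
  have cF2: "continuous_on (I \<times> UNIV) (F w2)" unfolding F_def[abs_def]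
    by (intro continuous_intros eval2_continuous fst_cont[OF sf2(4) fstI] fst_cont[OF sf2(5) fstI])
  have openU: "open U"
    using cF2 open_Times[OF I_int(2) open_UNIV] unfolding UF continuous_on_open_vimage[OF open_Times[OF I_int(2) open_UNIV]]
    by auto
  define Hx where "Hx p = (Fx w1 p * F w2 p - F w1 p * Fx w2 p) / (F w2 p * F w2 p)" for p
  define Hy where "Hy p = (Fy w1 p * F w2 p - F w1 p * Fy w2 p) / (F w2 p * F w2 p)" for p
  have Fnz: "F w2 p \<noteq> 0" if "p \<in> U" for p using that unfolding U_def f2F by auto
  have hasd: "((\<lambda>p. f1 p / f2 p) has_derivative (\<lambda>(u, v). Hx p * u + Hy p * v)) (at p)" if p: "p \<in> U" for p
  proof -
    obtain x y where xy: "p = (x, y)" by (cases p)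
    have xI: "x \<in> I" using p fstU xy by force
    have d1: "(F w1 has_derivative (\<lambda>h. Fx w1 p * fst h + Fy w1 p * snd h)) (at p)"
      unfolding xy F_def[abs_def] Fx_def Fy_def fst_conv snd_conv
      by (rule fF_deriv) (use sf1 xI in auto)
    have d2: "(F w2 has_derivative (\<lambda>h. Fx w2 p * fst h + Fy w2 p * snd h)) (at p)"
      unfolding xy F_def[abs_def] Fx_def Fy_def fst_conv snd_conv
      by (rule fF_deriv) (use sf2 xI in auto)
    have "((\<lambda>p. F w1 p / F w2 p) has_derivative
      (\<lambda>h. ((Fx w1 p * fst h + Fy w1 p * snd h) * F w2 p - F w1 p * (Fx w2 p * fst h + Fy w2 p * snd h)) / (F w2 p * F w2 p))) (at p)"
      by (rule has_derivative_divide'[OF d1 d2 Fnz[OF p]])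
    then show ?thesis unfolding f1F f2F
      by (rule has_derivative_eq_rhs) (auto simp: fun_eq_iff Hx_def Hy_def field_simps Fnz[OF p])
  qed
  have cFx: "continuous_on U (Fx w)" "continuous_on U (Fy w)" "continuous_on U (F w)"
    if "continuous_on I w" "continuous_on I (deriv w)" "continuous_on I (deriv (deriv w))" for w
    unfolding Fx_def[abs_def] Fy_def[abs_def] F_def[abs_def]
    by (intro continuous_intros eval2_continuous fst_cont[OF that(1) fstU] fst_cont[OF that(2) fstU] fst_cont[OF that(3) fstU])+
  have cHx: "continuous_on U Hx" unfolding Hx_def[abs_def]
    using cFx[OF sf1(4-6)] cFx[OF sf2(4-6)] Fnz by (intro continuous_intros) auto
  have cHy: "continuous_on U Hy" unfolding Hy_def[abs_def]
    using cFx[OF sf1(4-6)] cFx[OF sf2(4-6)] Fnz by (intro continuous_intros) auto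
  have ident: "(\<lambda>(x, y). eval2 P x y) p * Hx p + (\<lambda>(x, y). eval2 Q x y) p * Hy p = 0" if p: "p \<in> U" for p
  proof -
    obtain x y where xy: "p = (x, y)" by (cases p)
    have xI: "x \<in> I" using p fstU xy by force
    have Pv: "eval2 P x y = poly A2 x * (eval2 g0 x y * eval2 (dy2 g1) x y - eval2 g1 x y * eval2 (dy2 g0) x y)"
      unfolding P_def by simp
    have Qv: "eval2 Q x y = poly A0 x * (eval2 g1 x y)\<^sup>2 + poly A1 x * eval2 g1 x y * eval2 g0 x y + poly A2 x * (eval2 g0 x y)\<^sup>2
       + poly A2 x * (eval2 g1 x y * eval2 (dx2 g0) x y - eval2 g0 x y * eval2 (dx2 g1) x y)"
      unfolding Q_def by simp
    have e1: "poly A2 x * deriv (deriv w1) x + poly A1 x * deriv w1 x + poly A0 x * w1 x = 0" using sf1(3) xI by blast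
    have e2: "poly A2 x * deriv (deriv w2) x + poly A1 x * deriv w2 x + poly A0 x * w2 x = 0" using sf2(3) xI by blast
    have K: "eval2 P x y * (Fx w1 p * F w2 p - F w1 p * Fx w2 p) + eval2 Q x y * (Fy w1 p * F w2 p - F w1 p * Fy w2 p) = 0"
      unfolding Pv Qv xy F_def Fx_def Fy_def fst_conv snd_conv
      by (rule key_identity[OF e1 e2])
    have "(\<lambda>(x, y). eval2 P x y) p * Hx p + (\<lambda>(x, y). eval2 Q x y) p * Hy p
       = (eval2 P x y * (Fx w1 p * F w2 p - F w1 p * Fx w2 p) + eval2 Q x y * (Fy w1 p * F w2 p - F w1 p * Fy w2 p)) / (F w2 p * F w2 p)"
      unfolding Hx_def Hy_def xy by (simp add: add_divide_distrib)
    then show ?thesis using K by simp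
  qed
  have nc: "\<not> (\<exists>c. \<forall>p\<in>V. f1 p / f2 p = c)" if V: "open V" "V \<noteq> {}" "V \<subseteq> U" for V
  proof
    assume "\<exists>c. \<forall>p\<in>V. f1 p / f2 p = c"
    then obtain c where c: "\<forall>p\<in>V. f1 p / f2 p = c" by blast
    show False
    proof (rule nonconst[OF I_int(1,2) A2_I dy_quot fund V(1,2)])
      fix x y assume xy: "(x, y) \<in> V"
      then show "x \<in> I \<and> eval2 g1 x y * deriv w2 x - eval2 g0 x y * w2 x \<noteq> 0
        \<and> (eval2 g1 x y * deriv w1 x - eval2 g0 x y * w1 x) / (eval2 g1 x y * deriv w2 x - eval2 g0 x y * w2 x) = c"
        using V(3) c unfolding U_def f1_def f2_def by auto
    qed
  qed
  have goal: "open U \<and> first_integral (\<lambda>(x, y). eval2 P x y) (\<lambda>(x, y). eval2 Q x y) U (\<lambda>p. f1 p / f2 p)"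
    unfolding first_integral_def using openU hasd cHx cHy ident nc by blast
  show ?thesis unfolding Let_def using goal unfolding P_def Q_def f1_def f2_def U_def .
qed

end
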